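(* Let $(\Omega_i,\Sigma_i,\mathcal{M}_i,\mathcal{F}_i,\mathcal{T}_i)$, $i=1,\dots,n$, be vague membership spaces with $\mathcal{T}_i=\{N_i,\oplus_i,\otimes_i\}$, and let $\Sigma^n=\Sigma_1\times\cdots\times\Sigma_n$. For $A=(A_1,\dots,A_n),B=(B_1,\dots,B_n)\in\Sigma^n$ define $A\equiv B$ iff $\mathcal{M}_i(A_i)=\mathcal{M}_i(B_i)$ for all $i=1,\dots,n$. Then $\equiv$ is an equivalence relation on $\Sigma^n$, and on the set $\overline{\Sigma^n}$ of equivalence classes the relation $[A]\precsim[B]$ iff $\mathcal{M}_i(A_i)\le\mathcal{M}_i(B_i)$ for all $i$ is a well-defined partial order. If moreover every $\oplus_i$ is the maximum t-conorm ($x\oplus_i y=\max\{x,y\}$), then $(\overline{\Sigma^n};\precsim)$ is a complete lattice.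
   Context: A t-norm is a commutative, associative binary operation $\otimes$ on $[0,1]$ that is nondecreasing in each argument and satisfies $x\otimes 1=x$; a t-conorm $\oplus$ satisfies the same conditions except that $x\oplus 0=x$. A strong negation is a continuous, strictly decreasing map $N:[0,1]\to[0,1]$ with $N(0)=1$, $N(1)=0$ and $N(N(x))=x$. For a sequence $(a_n)$ in $[0,1]$, $\bigoplus_{n=1}^\infty a_n:=\lim_{m\to\infty}(a_1\oplus\cdots\oplus a_m)$ and $\bigotimes_{n=1}^\infty a_n:=\lim_{m\to\infty}(a_1\otimes\cdots\otimes a_m)$ (monotone limits); for an arbitrary family $(a_i)_{i\in I}$, $\bigoplus_{i\in I}a_i:=\sup\{\bigoplus_{i\in J}a_i: J\subseteq I \text{ finite}\}$, the empty $\oplus$ being $0$. A vague membership space $(\Omega,\Sigma,\mathcal{M},\mathcal{F},\mathcal{T})$ consists of: a nonempty set $\Omega$ (elementary vague attributes); two symbols $\bot,\top\notin\Omega$; the set $\Sigma$ of formal terms generated from $\Omega\cup\{\bot,\top\}$ by a unary operation $\neg$, binary operations $\veebar,\barwedge$ and countable operations $\veebar_{n=1}^\infty,\barwedge_{n=1}^\infty$ (here $\mathcal{F}=\{\bot,\top,\neg,\barwedge,\veebar\}$), where a finite join $A_1\veebar\cdots\veebar A_n$ is identified with the countable join of the sequence $A_1,\dots,A_n,\bot,\bot,\dots$ and a finite meet $A_1\barwedge\cdots\barwedge A_n$ with the countable meet of $A_1,\dots,A_n,\top,\top,\dots$; a triple $\mathcal{T}=\{N,\oplus,\otimes\}$ of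 a strong negation $N$, a t-norm $\otimes$ and a t-conorm $\oplus$ that are $N$-dual, i.e. $x\oplus y=N(N(x)\otimes N(y))$; and a map $\mathcal{M}:\Sigma\to[0,1]$ satisfying (I) there is $p\in\Omega$ with $\mathcal{M}(p)>0$, and if $\mathcal{M}(p_0)=1$ for some $p_0\in\Omega$ then $\mathcal{M}(p)=0$ for all $p\in\Omega\setminus\{p_0\}$; (II) $\mathcal{M}(\bot)=0$, $\mathcal{M}(\top)=1$; (III) $\mathcal{M}(\neg A)\le N(\mathcal{M}(A))$ for all $A\in\Sigma$; (IV) for every sequence $A_1,A_2,\dots\in\Sigma$, $\mathcal{M}(\veebar_{n=1}^\infty A_n)=\bigoplus_{n=1}^\infty\mathcal{M}(A_n)$ and $\mathcal{M}(\barwedge_{n=1}^\infty A_n)=\bigotimes_{n=1}^\infty\mathcal{M}(A_n)$; (V) for every $p\in\Omega$, $\mathcal{M}(\neg p)\ge\bigoplus_{q\in\Omega\setminus\{p\}}\mathcal{M}(q)$. The space is called regular if $\mathcal{M}(\neg A)=N(\mathcal{M}(A))$ for all $A\in\Sigma$. The product vague membership space of $n$ such spaces has attribute set $\Sigma^n=\Sigma_1\times\cdots\times\Sigma_n$, operations defined componentwise, and membership measure $\mathcal{M}^n(A_1,\dots,A_n)=(\mathcal{M}_1(A_1),\dots,\mathcal{M}_n(A_n))\in[0,1]^n$, with $[0,1]^n$ ordered componentwise. *)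

theory Defs
  imports Complex_Main "HOL-Library.FuncSet"
begin

text \<open>Terms generated from elementary attributes, bot, top, negation and countable
  join/meet.  Finite joins/meets are identified with countable ones padded by bot/top.\<close>

datatype 'a vterm = Atom 'a | VBot | VTop | VNeg "'a vterm"
  | VJoin "nat \<Rightarrow> 'a vterm" | VMeet "nat \<Rightarrow> 'a vterm"

definition vjoin2 :: "'a vterm \<Rightarrow> 'a vterm \<Rightarrow> 'a vterm" where
  "vjoin2 A B = VJoin (\<lambda>k. if k = 0 then A else if k = 1 then B else VBot)"

definition vmeet2 :: "'a vterm \<Rightarrow> 'a vterm \<Rightarrow> 'a vterm" where
  "vmeet2 A B = VMeet (\<lambda>k. if k = 0 then A else if k = 1 then B else VTop)"

definition vterms :: "'a set \<Rightarrow> 'a vterm set" where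
  "vterms \<Omega> = {t. set_vterm t \<subseteq> \<Omega>}"

definition unit_closed :: "(real \<Rightarrow> real \<Rightarrow> real) \<Rightarrow> bool" where
  "unit_closed f \<longleftrightarrow> (\<forall>x\<in>{0..1}. \<forall>y\<in>{0..1}. f x y \<in> {0..1})"

definition tnorm :: "(real \<Rightarrow> real \<Rightarrow> real) \<Rightarrow> bool" where
  "tnorm T \<longleftrightarrow> unit_closed T
     \<and> (\<forall>x\<in>{0..1}. \<forall>y\<in>{0..1}. T x y = T y x)
     \<and> (\<forall>x\<in>{0..1}. \<forall>y\<in>{0..1}. \<forall>z\<in>{0..1}. T (T x y) z = T x (T y z))
     \<and> (\<forall>x\<in>{0..1}. \<forall>x'\<in>{0..1}. \<forall>y\<in>{0..1}. x \<le> x' \<longrightarrow> T x y \<le> T x' y)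
     \<and> (\<forall>x\<in>{0..1}. T x 1 = x)"

definition tconorm :: "(real \<Rightarrow> real \<Rightarrow> real) \<Rightarrow> bool" where
  "tconorm S \<longleftrightarrow> unit_closed S
     \<and> (\<forall>x\<in>{0..1}. \<forall>y\<in>{0..1}. S x y = S y x)
     \<and> (\<forall>x\<in>{0..1}. \<forall>y\<in>{0..1}. \<forall>z\<in>{0..1}. S (S x y) z = S x (S y z))
     \<and> (\<forall>x\<in>{0..1}. \<forall>x'\<in>{0..1}. \<forall>y\<in>{0..1}. x \<le> x' \<longrightarrow> S x y \<le> S x' y)
     \<and> (\<forall>x\<in>{0..1}. S x 0 = x)"

definition strong_negation :: "(real \<Rightarrow> real) \<Rightarrow> bool" where
  "strong_negation N \<longleftrightarrow> N ` {0..1} \<subseteq> {0..1}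
     \<and> continuous_on {0..1} N
     \<and> (\<forall>x\<in>{0..1}. \<forall>y\<in>{0..1}. x < y \<longrightarrow> N y < N x)
     \<and> N 0 = 1 \<and> N 1 = 0
     \<and> (\<forall>x\<in>{0..1}. N (N x) = x)"

definition N_dual :: "(real \<Rightarrow> real) \<Rightarrow> (real \<Rightarrow> real \<Rightarrow> real) \<Rightarrow> (real \<Rightarrow> real \<Rightarrow> real) \<Rightarrow> bool" where
  "N_dual N S T \<longleftrightarrow> (\<forall>x\<in>{0..1}. \<forall>y\<in>{0..1}. S x y = N (T (N x) (N y)))"

fun fin_op :: "(real \<Rightarrow> real \<Rightarrow> real) \<Rightarrow> real \<Rightarrow> (nat \<Rightarrow> real) \<Rightarrow> nat \<Rightarrow> real" where
  "fin_op f e a 0 = e"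
| "fin_op f e a (Suc m) = f (fin_op f e a m) (a m)"

definition seq_op :: "(real \<Rightarrow> real \<Rightarrow> real) \<Rightarrow> real \<Rightarrow> (nat \<Rightarrow> real) \<Rightarrow> real" where
  "seq_op f e a = lim (fin_op f e a)"

definition fam_oplus :: "(real \<Rightarrow> real \<Rightarrow> real) \<Rightarrow> ('i \<Rightarrow> real) \<Rightarrow> 'i set \<Rightarrow> real" where
  "fam_oplus S a I = Sup {Finite_Set.fold (\<lambda>i acc. S (a i) acc) 0 J | J. finite J \<and> J \<subseteq> I}"

definition vms ::
  "'a set \<Rightarrow> ('a vterm \<Rightarrow> real) \<Rightarrow> (real \<Rightarrow> real) \<Rightarrow> (real \<Rightarrow> real \<Rightarrow> real) \<Rightarrow> (real \<Rightarrow> real \<Rightarrow> real) \<Rightarrow> bool"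
  where
  "vms \<Omega> M N S T \<longleftrightarrow>
     \<Omega> \<noteq> {}
   \<and> strong_negation N \<and> tnorm T \<and> tconorm S \<and> N_dual N S T
   \<and> (\<forall>A\<in>vterms \<Omega>. M A \<in> {0..1})
   \<comment> \<open>(I)\<close>
   \<and> (\<exists>p\<in>\<Omega>. M (Atom p) > 0)
   \<and> (\<forall>p0\<in>\<Omega>. M (Atom p0) = 1 \<longrightarrow> (\<forall>p\<in>\<Omega> - {p0}. M (Atom p) = 0))
   \<comment> \<open>(II)\<close>
   \<and> M VBot = 0 \<and> M VTop = 1
   \<comment> \<open>(III)\<close>
   \<and> (\<forall>A\<in>vterms \<Omega>. M (VNeg A) \<le> N (M A))
   \<comment> \<open>(IV)\<close>
   \<and> (\<forall>A. (\<forall>k. A k \<in> vterms \<Omega>) \<longrightarrow>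
          M (VJoin A) = seq_op S 0 (\<lambda>k. M (A k))
        \<and> M (VMeet A) = seq_op T 1 (\<lambda>k. M (A k)))
   \<comment> \<open>(V)\<close>
   \<and> (\<forall>p\<in>\<Omega>. M (VNeg (Atom p)) \<ge> fam_oplus S (\<lambda>q. M (Atom q)) (\<Omega> - {p}))"

definition is_lub_on :: "'b set \<Rightarrow> ('b \<times> 'b) set \<Rightarrow> 'b set \<Rightarrow> 'b \<Rightarrow> bool" where
  "is_lub_on C r B s \<longleftrightarrow> s \<in> C \<and> (\<forall>x\<in>B. (x, s) \<in> r)
     \<and> (\<forall>u\<in>C. (\<forall>x\<in>B. (x, u) \<in> r) \<longrightarrow> (s, u) \<in> r)"

definition is_glb_on :: "'b set \<Rightarrow> ('b \<times> 'b) set \<Rightarrow> 'b set \<Rightarrow> 'b \<Rightarrow> bool" where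
  "is_glb_on C r B s \<longleftrightarrow> s \<in> C \<and> (\<forall>x\<in>B. (s, x) \<in> r)
     \<and> (\<forall>u\<in>C. (\<forall>x\<in>B. (u, x) \<in> r) \<longrightarrow> (u, s) \<in> r)"

definition complete_lattice_on :: "'b set \<Rightarrow> ('b \<times> 'b) set \<Rightarrow> bool" where
  "complete_lattice_on C r \<longleftrightarrow> partial_order_on C r
     \<and> (\<forall>B\<subseteq>C. \<exists>s. is_lub_on C r B s) \<and> (\<forall>B\<subseteq>C. \<exists>s. is_glb_on C r B s)"

definition prod_terms :: "nat \<Rightarrow> (nat \<Rightarrow> 'a set) \<Rightarrow> (nat \<Rightarrow> 'a vterm) set" where
  "prod_terms n \<Omega> = PiE {1..n} (\<lambda>i. vterms (\<Omega> i))"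

definition meq :: "nat \<Rightarrow> (nat \<Rightarrow> 'a set) \<Rightarrow> (nat \<Rightarrow> 'a vterm \<Rightarrow> real)
    \<Rightarrow> ((nat \<Rightarrow> 'a vterm) \<times> (nat \<Rightarrow> 'a vterm)) set" where
  "meq n \<Omega> M = {(A, B). A \<in> prod_terms n \<Omega> \<and> B \<in> prod_terms n \<Omega>
       \<and> (\<forall>i\<in>{1..n}. M i (A i) = M i (B i))}"

definition mle :: "nat \<Rightarrow> (nat \<Rightarrow> 'a vterm \<Rightarrow> real) \<Rightarrow> (nat \<Rightarrow> 'a vterm) \<Rightarrow> (nat \<Rightarrow> 'a vterm) \<Rightarrow> bool" where
  "mle n M A B \<longleftrightarrow> (\<forall>i\<in>{1..n}. M i (A i) \<le> M i (B i))"

definition class_le :: "nat \<Rightarrow> (nat \<Rightarrow> 'a set) \<Rightarrow> (nat \<Rightarrow> 'a vterm \<Rightarrow> real)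
    \<Rightarrow> ((nat \<Rightarrow> 'a vterm) set \<times> (nat \<Rightarrow> 'a vterm) set) set" where
  "class_le n \<Omega> M = {(X, Y). X \<in> prod_terms n \<Omega> // meq n \<Omega> M \<and> Y \<in> prod_terms n \<Omega> // meq n \<Omega> M
       \<and> (\<exists>A\<in>X. \<exists>B\<in>Y. mle n M A B)}"

end

theory Submission
  imports Defs
begin

lemma meq_equiv: "equiv (prod_terms n \<Omega>) (meq n \<Omega> M)"
  unfolding equiv_def refl_on_def sym_def trans_def meq_def by auto

lemma mle_wd: "(A, A') \<in> meq n \<Omega> M \<Longrightarrow> (B, B') \<in> meq n \<Omega> M \<Longrightarrow> (mle n M A B \<longleftrightarrow> mle n M A' B')"
  unfolding meq_def mle_def by auto

lemma class_mem:
  assumes "X \<in> prod_terms n \<Omega> // meq n \<Omega> M" "A \<in> X" "B \<in> X"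
  shows "(A, B) \<in> meq n \<Omega> M"
proof -
  obtain a where "a \<in> prod_terms n \<Omega>" "X = meq n \<Omega> M `` {a}" using assms(1) by (auto elim: quotientE)
  then have "(a, A) \<in> meq n \<Omega> M" "(a, B) \<in> meq n \<Omega> M" using assms by auto
  then show ?thesis unfolding meq_def by auto
qed

lemma class_ne: "X \<in> prod_terms n \<Omega> // meq n \<Omega> M \<Longrightarrow> \<exists>A. A \<in> X"
  using in_quotient_imp_non_empty[OF meq_equiv] by blast

lemma class_sub: "X \<in> prod_terms n \<Omega> // meq n \<Omega> M \<Longrightarrow> X \<subseteq> prod_terms n \<Omega>"
  using in_quotient_imp_subset[OF meq_equiv] by blast

lemma class_le_iff:
  assumes "X \<in> prod_terms n \<Omega> // meq n \<Omega> M" "Y \<in> prod_terms n \<Omega> // meq n \<Omega> M"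
  shows "(X, Y) \<in> class_le n \<Omega> M \<longleftrightarrow> (\<forall>A\<in>X. \<forall>B\<in>Y. mle n M A B)"
proof
  assume "(X, Y) \<in> class_le n \<Omega> M"
  then obtain A' B' where ab: "A' \<in> X" "B' \<in> Y" "mle n M A' B'" unfolding class_le_def by auto
  show "\<forall>A\<in>X. \<forall>B\<in>Y. mle n M A B"
  proof (intro ballI)
    fix A B assume "A \<in> X" "B \<in> Y"
    then have "(A', A) \<in> meq n \<Omega> M" "(B', B) \<in> meq n \<Omega> M" using class_mem assms ab by metis+
    then show "mle n M A B" using mle_wd ab by blast
  qed
next
  assume "\<forall>A\<in>X. \<forall>B\<in>Y. mle n M A B"
  then show "(X, Y) \<in> class_le n \<Omega> M" using class_ne[OF assms(1)] class_ne[OF assms(2)] assms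
    unfolding class_le_def by auto
qed

lemma class_eqI:
  assumes "X \<in> prod_terms n \<Omega> // meq n \<Omega> M" "Y \<in> prod_terms n \<Omega> // meq n \<Omega> M"
    "A \<in> X" "B \<in> Y" "(A, B) \<in> meq n \<Omega> M"
  shows "X = Y"
  using assms quotient_eqI[OF meq_equiv] by metis

lemma meq_mle: "(A, B) \<in> meq n \<Omega> M \<Longrightarrow> mle n M A B"
  unfolding meq_def mle_def by auto

lemma mle_trans: "mle n M A B \<Longrightarrow> mle n M B D \<Longrightarrow> mle n M A D"
  unfolding mle_def by (meson order_trans)

lemma class_po: "partial_order_on (prod_terms n \<Omega> // meq n \<Omega> M) (class_le n \<Omega> M)"
proof -
  let ?C = "prod_terms n \<Omega> // meq n \<Omega> M"
  have sub: "class_le n \<Omega> M \<subseteq> ?C \<times> ?C" unfolding class_le_def by (rule subsetI) (clarsimp split: prod.splits)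
  have refl: "refl_on ?C (class_le n \<Omega> M)"
    unfolding refl_on_def
  proof
    fix X assume X: "X \<in> ?C"
    have "\<forall>A\<in>X. \<forall>B\<in>X. mle n M A B"
      using class_mem[OF X] meq_mle by blast
    then show "(X, X) \<in> class_le n \<Omega> M" using class_le_iff[OF X X] by blast
  qed
  have tr: "trans (class_le n \<Omega> M)"
    unfolding trans_def
  proof (intro allI impI)
    fix X Y Z assume xy: "(X, Y) \<in> class_le n \<Omega> M" and yz: "(Y, Z) \<in> class_le n \<Omega> M"
    then have C: "X \<in> ?C" "Y \<in> ?C" "Z \<in> ?C" using sub by auto
    obtain B where B: "B \<in> Y" using class_ne[OF C(2)] by blast
    have "\<forall>A\<in>X. \<forall>D\<in>Z. mle n M A D"
    proof (intro ballI)
      fix A D assume "A \<in> X" "D \<in> Z"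
      then have "mle n M A B" "mle n M B D"
        using xy yz B class_le_iff[OF C(1) C(2)] class_le_iff[OF C(2) C(3)] by blast+
      then show "mle n M A D" by (rule mle_trans)
    qed
    then show "(X, Z) \<in> class_le n \<Omega> M" using class_le_iff[OF C(1) C(3)] by blast
  qed
  have anti: "antisym (class_le n \<Omega> M)"
    unfolding antisym_def
  proof (intro allI impI)
    fix X Y assume xy: "(X, Y) \<in> class_le n \<Omega> M" and yx: "(Y, X) \<in> class_le n \<Omega> M"
    then have C: "X \<in> ?C" "Y \<in> ?C" using sub by auto
    obtain A where A: "A \<in> X" using class_ne[OF C(1)] by blast
    obtain B where B: "B \<in> Y" using class_ne[OF C(2)] by blast
    have "mle n M A B" "mle n M B A"
      using xy yx A B class_le_iff[OF C(1) C(2)] class_le_iff[OF C(2) C(1)] by auto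
    moreover have "A \<in> prod_terms n \<Omega>" "B \<in> prod_terms n \<Omega>" using A B class_sub C by blast+
    ultimately have "(A, B) \<in> meq n \<Omega> M" unfolding mle_def meq_def by (auto intro: order_antisym)
    then show "X = Y" using class_eqI[OF C A B] by blast
  qed
  show ?thesis unfolding partial_order_on_def preorder_on_def using sub refl tr anti by blast
qed

lemma glb_from_lub:
  assumes "\<forall>B\<subseteq>C. \<exists>s. is_lub_on C r B s"
  shows "\<forall>B\<subseteq>C. \<exists>s. is_glb_on C r B s"
proof (intro allI impI)
  fix B assume B: "B \<subseteq> C"
  let ?L = "{u\<in>C. \<forall>x\<in>B. (u, x) \<in> r}"
  have "?L \<subseteq> C" by blast
  then obtain s where s: "is_lub_on C r ?L s" using assms by blast
  have sC: "s \<in> C" and sup: "\<forall>x\<in>?L. (x, s) \<in> r"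
    and least: "\<forall>u\<in>C. (\<forall>x\<in>?L. (x, u) \<in> r) \<longrightarrow> (s, u) \<in> r"
    using s unfolding is_lub_on_def by auto
  have "\<forall>x\<in>B. (s, x) \<in> r"
  proof
    fix x assume "x \<in> B"
    then have "x \<in> C" "\<forall>y\<in>?L. (y, x) \<in> r" using B by auto
    then show "(s, x) \<in> r" using least by blast
  qed
  moreover have "\<forall>u\<in>C. (\<forall>x\<in>B. (u, x) \<in> r) \<longrightarrow> (u, s) \<in> r"
    using sup by blast
  ultimately have "is_glb_on C r B s" using sC unfolding is_glb_on_def by blast
  then show "\<exists>s. is_glb_on C r B s" by blast
qed

lemma fin_op_max:
  assumes f: "\<forall>x\<in>{0..1}. \<forall>y\<in>{0..1}. f x y = max x y" and b: "\<forall>k. b k \<in> {0..(1::real)}"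
  shows "fin_op f 0 b m \<in> {0..1} \<and> (\<forall>k<m. b k \<le> fin_op f 0 b m)
     \<and> (\<forall>u. u \<ge> 0 \<and> (\<forall>k<m. b k \<le> u) \<longrightarrow> fin_op f 0 b m \<le> u)"
proof (induction m)
  case 0
  then show ?case by simp
next
  case (Suc m)
  have e: "fin_op f 0 b (Suc m) = max (fin_op f 0 b m) (b m)"
    using Suc f b by simp
  show ?case unfolding e using Suc b by (auto simp: less_Suc_eq)
qed

lemma sup_attained:
  assumes v: "vms \<Omega> M N S T" and Smax: "\<forall>x\<in>{0..1}. \<forall>y\<in>{0..1}. S x y = max x y"
    and W: "W \<subseteq> M ` vterms \<Omega>"
  shows "\<exists>t\<in>vterms \<Omega>. M t = Sup (insert 0 W)"
proof -
  let ?W = "insert 0 W"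
  let ?s = "Sup ?W"
  have bot: "VBot \<in> vterms \<Omega>" unfolding vterms_def by simp
  have M01: "\<forall>A\<in>vterms \<Omega>. M A \<in> {0..1}" "M VBot = 0" using v unfolding vms_def by auto
  have W': "?W \<subseteq> M ` vterms \<Omega>" using W bot M01 by (metis image_eqI insert_subset)
  have W01: "?W \<subseteq> {0..1}" using W' M01 by auto
  have bdd: "bdd_above ?W" using W01 by (meson atLeastAtMost_iff bdd_above_def subset_iff)
  have up: "\<And>x. x \<in> ?W \<Longrightarrow> x \<le> ?s" using bdd by (simp add: cSup_upper)
  have s0: "0 \<le> ?s" using up by blast
  have "\<forall>k. \<exists>t. t \<in> vterms \<Omega> \<and> ?s - inverse (real (Suc k)) < M t \<and> M t \<in> ?W"
  proof
    fix k
    have "?s - inverse (real (Suc k)) < ?s" by simp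
    then have "\<exists>w\<in>?W. ?s - inverse (real (Suc k)) < w"
      by (rule less_cSup_iff[THEN iffD1, OF _ bdd, rotated]) simp
    then obtain w where w: "w \<in> ?W" "?s - inverse (real (Suc k)) < w" by blast
    then have "w \<in> M ` vterms \<Omega>" using W' by blast
    then obtain t where t: "t \<in> vterms \<Omega>" "w = M t" by (rule imageE)
    show "\<exists>t. t \<in> vterms \<Omega> \<and> ?s - inverse (real (Suc k)) < M t \<and> M t \<in> ?W"
      using w t by (intro exI[of _ t]) simp
  qed
  then have "\<exists>a. \<forall>k. a k \<in> vterms \<Omega> \<and> ?s - inverse (real (Suc k)) < M (a k) \<and> M (a k) \<in> ?W"
    by (rule choice)
  then obtain a where aa: "\<forall>k. a k \<in> vterms \<Omega> \<and> ?s - inverse (real (Suc k)) < M (a k) \<and> M (a k) \<in> ?W"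
    by blast
  have a: "\<And>k. a k \<in> vterms \<Omega>" "\<And>k. ?s - inverse (real (Suc k)) < M (a k)"
    "\<And>k. M (a k) \<in> ?W" using aa by blast+
  define b where "b k = M (a k)" for k
  have b01': "b k \<in> {0..1}" for k using W01 a(3)[of k] unfolding b_def by (rule subsetD)
  then have b01: "\<forall>k. b k \<in> {0..1}" by blast
  note fm = fin_op_max[OF Smax b01]
  have bs: "\<And>k. b k \<le> ?s" using up a(3) unfolding b_def by blast
  have upper: "fin_op S 0 b m \<le> ?s" for m
    using fm[of m] s0 bs by blast
  have lower: "?s - inverse (real (Suc m)) \<le> fin_op S 0 b (Suc m)" for m
  proof -
    have "b m \<le> fin_op S 0 b (Suc m)" using fm[of "Suc m"] by blast
    moreover have "?s - inverse (real (Suc m)) < b m" using a(2)[of m] unfolding b_def .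
    ultimately show ?thesis by linarith
  qed
  have lim1: "(\<lambda>m. ?s - inverse (real (Suc m))) \<longlonglongrightarrow> ?s - 0"
    by (intro tendsto_intros LIMSEQ_inverse_real_of_nat)
  have ev1: "eventually (\<lambda>m. ?s - inverse (real (Suc m)) \<le> fin_op S 0 b (Suc m)) sequentially"
    by (intro always_eventually allI lower)
  have ev2: "eventually (\<lambda>m. fin_op S 0 b (Suc m) \<le> ?s) sequentially"
    by (intro always_eventually allI upper)
  have "(\<lambda>m. fin_op S 0 b (Suc m)) \<longlonglongrightarrow> ?s - 0"
    by (rule real_tendsto_sandwich[OF ev1 ev2 lim1]) simp
  then have "(\<lambda>m. fin_op S 0 b (Suc m)) \<longlonglongrightarrow> ?s" by simp
  then have "fin_op S 0 b \<longlonglongrightarrow> ?s" by (rule LIMSEQ_imp_Suc)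
  then have "seq_op S 0 b = ?s" unfolding seq_op_def by (rule limI)
  moreover have "M (VJoin a) = seq_op S 0 (\<lambda>k. M (a k))" using v a(1) unfolding vms_def by blast
  moreover have "VJoin a \<in> vterms \<Omega>" using a(1) unfolding vterms_def by auto
  ultimately show ?thesis unfolding b_def by auto
qed

lemma vms_M01: "vms \<Omega> M N S T \<Longrightarrow> A \<in> vterms \<Omega> \<Longrightarrow> M A \<in> {0..1}"
  unfolding vms_def by blast

lemma prod_terms_mem: "A \<in> prod_terms n \<Omega> \<Longrightarrow> i \<in> {1..n} \<Longrightarrow> A i \<in> vterms (\<Omega> i)"
  unfolding prod_terms_def by (rule PiE_mem)

theorem proposition6p1:
  fixes n :: nat
    and \<Omega> :: "nat \<Rightarrow> 'a set"
    and M :: "nat \<Rightarrow> 'a vterm \<Rightarrow> real"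
    and N :: "nat \<Rightarrow> real \<Rightarrow> real"
    and S T :: "nat \<Rightarrow> real \<Rightarrow> real \<Rightarrow> real"
  assumes "n \<ge> 1"
    and "\<forall>i\<in>{1..n}. vms (\<Omega> i) (M i) (N i) (S i) (T i)"
  shows "equiv (prod_terms n \<Omega>) (meq n \<Omega> M)
    \<and> (\<forall>A\<in>prod_terms n \<Omega>. \<forall>A'\<in>prod_terms n \<Omega>. \<forall>B\<in>prod_terms n \<Omega>. \<forall>B'\<in>prod_terms n \<Omega>.
         (A, A') \<in> meq n \<Omega> M \<longrightarrow> (B, B') \<in> meq n \<Omega> M \<longrightarrow> (mle n M A B \<longleftrightarrow> mle n M A' B'))
    \<and> partial_order_on (prod_terms n \<Omega> // meq n \<Omega> M) (class_le n \<Omega> M)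
    \<and> ((\<forall>i\<in>{1..n}. \<forall>x\<in>{0..1}. \<forall>y\<in>{0..1}. S i x y = max x y)
         \<longrightarrow> complete_lattice_on (prod_terms n \<Omega> // meq n \<Omega> M) (class_le n \<Omega> M))"
proof -
  let ?P = "prod_terms n \<Omega>"
  let ?E = "meq n \<Omega> M"
  let ?C = "?P // ?E"
  let ?R = "class_le n \<Omega> M"
  have v: "\<And>i. i \<in> {1..n} \<Longrightarrow> vms (\<Omega> i) (M i) (N i) (S i) (T i)" using assms(2) by blast
  have 2: "\<forall>A\<in>?P. \<forall>A'\<in>?P. \<forall>B\<in>?P. \<forall>B'\<in>?P.
         (A, A') \<in> ?E \<longrightarrow> (B, B') \<in> ?E \<longrightarrow> (mle n M A B \<longleftrightarrow> mle n M A' B')"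
    using mle_wd by blast
  have 4: "complete_lattice_on ?C ?R" if Smax: "\<forall>i\<in>{1..n}. \<forall>x\<in>{0..1}. \<forall>y\<in>{0..1}. S i x y = max x y"
  proof -
    have lub: "\<forall>B\<subseteq>?C. \<exists>s. is_lub_on ?C ?R B s"
    proof (intro allI impI)
      fix B assume B: "B \<subseteq> ?C"
      define W where "W i = {M i (A i) | A. \<exists>X\<in>B. A \<in> X}" for i
      have inP: "A \<in> ?P" if "X \<in> B" "A \<in> X" for X A
        using that B class_sub by blast
      have Wsub: "W i \<subseteq> M i ` vterms (\<Omega> i)" if i: "i \<in> {1..n}" for i
      proof
        fix w assume "w \<in> W i"
        then obtain A X where "X \<in> B" "A \<in> X" "w = M i (A i)" unfolding W_def by blast
        then show "w \<in> M i ` vterms (\<Omega> i)" using inP prod_terms_mem[OF _ i] by blast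
      qed
      have "\<forall>i\<in>{1..n}. \<exists>t\<in>vterms (\<Omega> i). M i t = Sup (insert 0 (W i))"
      proof
        fix i assume i: "i \<in> {1..n}"
        show "\<exists>t\<in>vterms (\<Omega> i). M i t = Sup (insert 0 (W i))"
          by (rule sup_attained[OF v[OF i] _ Wsub[OF i]]) (use Smax i in blast)
      qed
      then obtain t where t: "\<forall>i\<in>{1..n}. t i \<in> vterms (\<Omega> i) \<and> M i (t i) = Sup (insert 0 (W i))"
        by (metis (no_types, lifting) bchoice)
      have W01: "insert 0 (W i) \<subseteq> {0..1}" if i: "i \<in> {1..n}" for i
        using Wsub[OF i] vms_M01[OF v[OF i]] by auto
      have bdd: "bdd_above (insert 0 (W i))" if i: "i \<in> {1..n}" for i
        using W01[OF i] unfolding bdd_above_def by (meson atLeastAtMost_iff subset_iff)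
      define A0 where "A0 = restrict t {1..n}"
      have A0P: "A0 \<in> ?P" unfolding A0_def prod_terms_def using t by auto
      have A0i: "M i (A0 i) = Sup (insert 0 (W i))" if "i \<in> {1..n}" for i
        using t that unfolding A0_def by simp
      define s where "s = ?E `` {A0}"
      have sC: "s \<in> ?C" unfolding s_def using A0P by (rule quotientI)
      have A0s: "A0 \<in> s" unfolding s_def meq_def using A0P by simp
      have up: "(X, s) \<in> ?R" if X: "X \<in> B" for X
      proof -
        have XC: "X \<in> ?C" using X B by blast
        obtain A where A: "A \<in> X" using class_ne[OF XC] by blast
        have "mle n M A A0" unfolding mle_def
        proof
          fix i assume i: "i \<in> {1..n}"
          have "M i (A i) \<in> W i" unfolding W_def using X A by blast
          then have "M i (A i) \<le> Sup (insert 0 (W i))" using bdd[OF i] by (simp add: cSup_upper)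
          then show "M i (A i) \<le> M i (A0 i)" using A0i[OF i] by simp
        qed
        then show ?thesis unfolding class_le_def using XC sC A A0s by blast
      qed
      have least: "(s, U) \<in> ?R" if U: "U \<in> ?C" "\<forall>X\<in>B. (X, U) \<in> ?R" for U
      proof -
        obtain D where D: "D \<in> U" using class_ne[OF U(1)] by blast
        have DP: "D \<in> ?P" using D class_sub[OF U(1)] by blast
        have "mle n M A0 D" unfolding mle_def
        proof
          fix i assume i: "i \<in> {1..n}"
          have "Sup (insert 0 (W i)) \<le> M i (D i)"
          proof (rule cSup_least)
            fix w assume "w \<in> insert 0 (W i)"
            then consider "w = 0" | "w \<in> W i" by blast
            then show "w \<le> M i (D i)"
            proof cases
              case 1
              then show ?thesis using vms_M01[OF v[OF i] prod_terms_mem[OF DP i]] by simp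
            next
              case 2
              then obtain A X where AX: "X \<in> B" "A \<in> X" "w = M i (A i)" unfolding W_def by blast
              have "X \<in> ?C" using AX B by blast
              then have "mle n M A D" using class_le_iff[OF _ U(1)] U(2) AX D by blast
              then show ?thesis using AX i unfolding mle_def by blast
            qed
          qed simp
          then show "M i (A0 i) \<le> M i (D i)" using A0i[OF i] by simp
        qed
        then show ?thesis unfolding class_le_def using U(1) sC D A0s by blast
      qed
      have "is_lub_on ?C ?R B s" unfolding is_lub_on_def using sC up least by blast
      then show "\<exists>s. is_lub_on ?C ?R B s" by blast
    qed
    show ?thesis unfolding complete_lattice_on_def
      using class_po lub glb_from_lub[OF lub] by blast
  qed
  show ?thesis using meq_equiv 2 class_po 4 by blast
qed

end
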